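(* Suppose that the finite family $\mathcal{A}=\{A_i\}_{i\in\Lambda}\subset GL_{d+1}(\mathbb{R})$ strictly preserves a simplicial cone $\Sigma=\Sigma_{v_1,\ldots,v_{d+1}}\subset\{x\in\mathbb{R}^{d+1}:x_{d+1}>0\}\cup\{0\}$. Then the associated IFS $\mathcal{F}_{\mathcal{A}}=\{f_A\}_{A\in\mathcal{A}}$ is real-analytic and uniformly hyperbolic on $\overline{V}\subset\mathbb{R}^d$, in the sense that there exist $C>0$ and $\gamma\in(0,1)$ such that $\max_{x\in\overline V}\|f'_{\mathbf{i}}(x)\|\le C\gamma^n$ for all $\mathbf{i}\in\Lambda^n$, where $f_{\mathbf{i}}=f_{A_{i_1}}\circ\cdots\circ f_{A_{i_n}}$ and $\|f'_{\mathbf{i}}(x)\|$ is the operator norm of the differential at $x$.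
   Context: For linearly independent $v_1,\ldots,v_{d+1}\in\mathbb{R}^{d+1}$, $\Sigma_{v_1,\ldots,v_{d+1}}=\{\sum_k x_kv_k: x_k\ge0\}$. $A$ strictly preserves $\Sigma$ if $A(\Sigma\setminus\{0\})\subset\Sigma^\circ$. For $x\in\mathbb{R}^d$, $f_A(x)=P_d\big(A(x,1)/A(x,1)_{d+1}\big)$ whenever $A(x,1)_{d+1}\ne0$, where $(x,1)\in\mathbb{R}^{d+1}$, $y_{d+1}$ is the last coordinate of $y$, and $P_d$ is the projection onto the first $d$ coordinates. $\overline{V}=P_d(\Sigma\cap\{x_{d+1}=1\})$ and $V$ is its interior. *)

theory Defs
  imports "HOL-Analysis.Analysis"
begin

text \<open>Convention: R^d is real^'d; R^(d+1) is real^('d::finite option), where the index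
None plays the role of the last coordinate d+1 and Some i the i-th coordinate.\<close>

definition lift1 :: "real^'d::finite \<Rightarrow> real^('d::finite option)" where
  "lift1 x = (\<chi> j. case j of None \<Rightarrow> 1 | Some i \<Rightarrow> x $ i)"

definition projd :: "real^('d::finite option) \<Rightarrow> real^'d" where
  "projd y = (\<chi> i. y $ (Some i))"

definition simp_cone :: "('d::finite option \<Rightarrow> real^('d::finite option)) \<Rightarrow> (real^('d::finite option)) set" where
  "simp_cone v = {y. \<exists>c. (\<forall>k. c k \<ge> 0) \<and> y = (\<Sum>k\<in>UNIV. c k *\<^sub>R v k)}"

definition strictly_preserves ::
  "real^('d::finite option)^('d::finite option) \<Rightarrow> (real^('d::finite option)) set \<Rightarrow> bool" where
  "strictly_preserves A S \<longleftrightarrow> (\<lambda>y. A *v y) ` (S - {0}) \<subseteq> interior S"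

definition fA :: "real^('d::finite option)^('d::finite option) \<Rightarrow> real^'d::finite \<Rightarrow> real^'d" where
  "fA A x = projd ((1 / (A *v lift1 x) $ None) *\<^sub>R (A *v lift1 x))"

definition Vbar :: "(real^('d::finite option)) set \<Rightarrow> (real^'d) set" where
  "Vbar S = projd ` (S \<inter> {y. y $ None = 1})"

definition fword :: "('i \<Rightarrow> real^('d::finite option)^('d::finite option)) \<Rightarrow> 'i list \<Rightarrow> real^'d::finite \<Rightarrow> real^'d" where
  "fword A ws = foldr (\<lambda>i g. fA (A i) \<circ> g) ws id"

text \<open>Real analyticity: locally the sum of an (unconditionally, i.e. absolutely)
convergent multivariate power series.\<close>
definition real_analytic_on :: "(real^'d::finite \<Rightarrow> real^'e::finite) \<Rightarrow> (real^'d) set \<Rightarrow> bool" where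
  "real_analytic_on f U \<longleftrightarrow> (\<forall>x0\<in>U. \<exists>r>0. \<exists>a :: ('d \<Rightarrow> nat) \<Rightarrow> real^'e.
      \<forall>y\<in>ball x0 r. ((\<lambda>\<alpha>. (\<Prod>i\<in>UNIV. (y $ i - x0 $ i) ^ (\<alpha> i)) *\<^sub>R a \<alpha>) has_sum f y) UNIV)"

end

theory Submission
  imports Defs
begin


lemma has_sum_group:
  fixes f :: "'a \<Rightarrow> 'c::banach" and g :: "'a \<Rightarrow> 'b"
  assumes "(f has_sum S) A" "\<And>y. finite {x\<in>A. g x = y}"
  shows "((\<lambda>y. sum f {x\<in>A. g x = y}) has_sum S) UNIV"
proof -
  have inj: "inj_on (\<lambda>x. (g x, x)) A" by (auto simp: inj_on_def)
  have img: "(\<lambda>x. (g x, x)) ` A = Sigma UNIV (\<lambda>y. {x\<in>A. g x = y})" by auto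
  have "((\<lambda>(y,x). f x) has_sum S) (Sigma UNIV (\<lambda>y. {x\<in>A. g x = y}))"
    using has_sum_reindex[OF inj, of "\<lambda>(y,x). f x" S] assms(1) img by (simp add: o_def)
  then show ?thesis
    by (rule has_sum_Sigma[OF isUCont_plus]) (use assms(2) in auto)
qed

lemma fin_len: "finite {w::'d::finite list. length w = k}"
  using finite_lists_length_eq[of "UNIV::'d set" k] by simp

lemma fin_len_le: "finite {w::'d::finite list. length w \<le> k}"
  using finite_lists_length_le[of "UNIV::'d set" k] by simp

lemma sum_lists_length:
  fixes x :: "'d::finite \<Rightarrow> real"
  shows "(\<Sum>w\<in>{w::'d list. length w = k}. prod_list (map x w)) = (sum x UNIV)^k"
proof (induction k)
  case 0
  have "{w::'d list. length w = 0} = {[]}" by auto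
  then show ?case by simp
next
  case (Suc k)
  have eq: "{w::'d list. length w = Suc k} = (\<lambda>(i,w). i#w) ` (UNIV \<times> {w. length w = k})"
    by (auto simp: length_Suc_conv)
  have inj: "inj_on (\<lambda>(i,w). i#w) (UNIV \<times> {w::'d list. length w = k})" by (auto simp: inj_on_def)
  have "(\<Sum>w\<in>{w::'d list. length w = Suc k}. prod_list (map x w))
      = (\<Sum>(i,w)\<in>UNIV \<times> {w::'d list. length w = k}. x i * prod_list (map x w))"
    unfolding eq sum.reindex[OF inj] by (simp add: case_prod_unfold)
  also have "\<dots> = (\<Sum>i\<in>UNIV. x i * (\<Sum>w\<in>{w::'d list. length w = k}. prod_list (map x w)))"
    by (simp add: sum.cartesian_product[symmetric] sum_distrib_left)
  also have "\<dots> = (sum x UNIV)^(Suc k)"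
    by (simp add: Suc sum_distrib_right[symmetric])
  finally show ?case .
qed

lemma abs_prod_list: "\<bar>prod_list (map x w)\<bar> = prod_list (map (\<lambda>i. \<bar>x i\<bar>) w)"
  for x :: "'a \<Rightarrow> real"
  by (induction w) (auto simp: abs_mult)

lemma geo_lists:
  fixes x :: "'d::finite \<Rightarrow> real"
  assumes "(\<Sum>i\<in>UNIV. \<bar>x i\<bar>) < 1"
  shows "((\<lambda>w. prod_list (map x w)) has_sum (1 / (1 - sum x UNIV))) UNIV"
proof -
  define s where "s = (\<Sum>i\<in>UNIV. \<bar>x i\<bar>)"
  have s0: "0 \<le> s" by (simp add: s_def sum_nonneg)
  have s1: "s < 1" using assms s_def by simp
  have abs: "(\<lambda>w::'d list. norm (prod_list (map x w))) summable_on UNIV"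
  proof (rule nonneg_bdd_above_summable_on)
    show "bdd_above (sum (\<lambda>w. norm (prod_list (map x w))) ` {F. F \<subseteq> UNIV \<and> finite F})"
    proof (rule bdd_aboveI2)
      fix F :: "'d list set" assume "F \<in> {F. F \<subseteq> UNIV \<and> finite F}"
      then have fF: "finite F" by simp
      define N where "N = Max (length ` F)"
      have sub: "F \<subseteq> {w. length w \<le> N}" using fF by (auto simp: N_def)
      have "(\<Sum>w\<in>F. norm (prod_list (map x w))) \<le> (\<Sum>w\<in>{w. length w \<le> N}. norm (prod_list (map x w)))"
        by (rule sum_mono2[OF fin_len_le sub]) auto
      also have "\<dots> = (\<Sum>k\<in>{..N}. \<Sum>w\<in>{w\<in>{w. length w \<le> N}. length w = k}. prod_list (map (\<lambda>i. \<bar>x i\<bar>) w))"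
        by (subst sum.group[OF fin_len_le, of "{..N}" length, symmetric]) (auto simp: abs_prod_list)
      also have "\<dots> = (\<Sum>k\<in>{..N}. \<Sum>w\<in>{w. length w = k}. prod_list (map (\<lambda>i. \<bar>x i\<bar>) w))"
        by (intro sum.cong refl arg_cong2[where f=sum]) auto
      also have "\<dots> = (\<Sum>k\<in>{..N}. s^k)"
        by (simp add: sum_lists_length s_def)
      also have "\<dots> \<le> (\<Sum>k. s^k)"
        by (rule sum_le_suminf) (use s0 s1 summable_geometric[of s] in auto)
      finally show "(\<Sum>w\<in>F. norm (prod_list (map x w))) \<le> (\<Sum>k. s^k)" .
    qed
  qed auto
  then have "(\<lambda>w::'d list. prod_list (map x w)) summable_on UNIV"
    by (rule abs_summable_summable)
  then obtain V where V: "((\<lambda>w::'d list. prod_list (map x w)) has_sum V) UNIV"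
    using has_sum_infsum by blast
  have "((\<lambda>k. sum (\<lambda>w. prod_list (map x w)) {w\<in>UNIV. length w = k}) has_sum V) UNIV"
    by (rule has_sum_group[OF V]) (simp add: fin_len)
  then have "((\<lambda>k. (sum x UNIV)^k) has_sum V) UNIV"
    by (simp add: sum_lists_length)
  then have "(\<lambda>k. (sum x UNIV)^k) sums V" by (rule has_sum_imp_sums)
  moreover have "\<bar>sum x UNIV\<bar> < 1"
    using sum_abs[of x UNIV] s1 s_def by linarith
  then have "(\<lambda>k. (sum x UNIV)^k) sums (1 / (1 - sum x UNIV))"
    by (intro geometric_sums) simp
  ultimately have "V = 1 / (1 - sum x UNIV)" using sums_unique2 by blast
  with V show ?thesis by simp
qed


lemma sum_option_UNIV: "(\<Sum>z\<in>(UNIV::'a::finite option set). f z) = f None + (\<Sum>i\<in>UNIV. f (Some i))"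
proof -
  have "(\<Sum>z\<in>(UNIV::'a option set). f z) = (\<Sum>z\<in>insert None (range Some). f z)"
    by (simp add: UNIV_option_conv[symmetric])
  also have "\<dots> = f None + (\<Sum>z\<in>range Some. f z)" by (subst sum.insert) auto
  also have "(\<Sum>z\<in>range Some. f z) = (\<Sum>i\<in>UNIV. f (Some i))"
    by (subst sum.reindex) (auto simp: inj_on_def)
  finally show ?thesis .
qed

lemma lift1_None[simp]: "lift1 x $ None = 1" and lift1_Some[simp]: "lift1 x $ Some i = x $ i"
  by (simp_all add: lift1_def)

lemma projd_nth[simp]: "projd y $ i = y $ Some i"
  by (simp add: projd_def)

lemma Mv_lift1: "(M *v lift1 y) $ j = M$j$None + (\<Sum>i\<in>UNIV. M$j$(Some i) * y$i)"
  by (simp add: matrix_vector_mult_def sum_option_UNIV)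

lemma has_sum_prod_finite:
  fixes f :: "'a \<times> 'b \<Rightarrow> 'c::banach"
  assumes "finite A" "\<And>a. a\<in>A \<Longrightarrow> ((\<lambda>b. f (a,b)) has_sum s a) B"
  shows "(f has_sum (\<Sum>a\<in>A. s a)) (A \<times> B)"
  using assms
proof (induction A rule: finite_induct)
  case empty then show ?case by simp
next
  case (insert a A)
  have e: "insert a A \<times> B = (Pair a ` B) \<union> (A \<times> B)" by auto
  have "(f has_sum s a) (Pair a ` B)"
    using insert.prems[of a] by (subst has_sum_reindex) (auto simp: inj_on_def o_def)
  moreover have "(f has_sum (\<Sum>a\<in>A. s a)) (A \<times> B)" using insert by auto
  ultimately have "(f has_sum (s a + (\<Sum>a\<in>A. s a))) (Pair a ` B \<union> A \<times> B)"
    by (rule has_sum_Un_disjoint) (use insert.hyps in auto)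
  then show ?case using insert.hyps by (simp add: e)
qed

lemma prod_list_count: "prod_list (map h w) = (\<Prod>i\<in>UNIV. h i ^ count_list w i)"
  for h :: "'d::finite \<Rightarrow> real"
proof (induction w)
  case Nil then show ?case by simp
next
  case (Cons a w)
  have "(\<Prod>i\<in>UNIV. h i ^ count_list (a#w) i) = (\<Prod>i\<in>UNIV. h i ^ (if a = i then 1 else 0) * h i ^ count_list w i)"
    by (intro prod.cong) (auto simp: power_add)
  also have "\<dots> = (\<Prod>i\<in>UNIV. h i ^ (if a = i then 1 else 0)) * (\<Prod>i\<in>UNIV. h i ^ count_list w i)"
    by (rule prod.distrib)
  also have "(\<Prod>i\<in>UNIV. h i ^ (if a = i then 1 else 0)) = h a"
  proof -
    have "(\<Prod>i\<in>UNIV. h i ^ (if a = i then 1 else 0)) = (\<Prod>i\<in>UNIV. if a = i then h i else 1)"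
      by (intro prod.cong) auto
    then show ?thesis by (simp add: prod.delta)
  qed
  finally show ?case using Cons by simp
qed

lemma prod_list_mult: "prod_list (map (\<lambda>i. f i * g i) w) = prod_list (map f w) * prod_list (map g w)"
  for f g :: "'a \<Rightarrow> real"
  by (induction w) auto

lemma len_count: "length w = (\<Sum>i\<in>(UNIV::'d::finite set). count_list w i)"
proof (induction w)
  case Nil then show ?case by simp
next
  case (Cons a w)
  have "(\<Sum>i\<in>(UNIV::'d set). count_list (a#w) i) = (\<Sum>i\<in>UNIV. (if a = i then 1 else 0) + count_list w i)"
    by (intro sum.cong) auto
  also have "\<dots> = 1 + length w" by (simp add: sum.distrib Cons)
  finally show ?case by simp
qed

lemma analytic_point:
  fixes M :: "real^('d::finite option)^('d option)" and x0 :: "real^'d"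
  assumes d0: "(M *v lift1 x0) $ None \<noteq> 0"
  shows "\<exists>r>0. \<exists>a :: ('d \<Rightarrow> nat) \<Rightarrow> real^'d.
      \<forall>y\<in>ball x0 r. ((\<lambda>\<alpha>. (\<Prod>i\<in>UNIV. (y $ i - x0 $ i) ^ (\<alpha> i)) *\<^sub>R a \<alpha>) has_sum fA M y) UNIV"
proof -
  define d where "d = (M *v lift1 x0) $ None"
  define \<beta> where "\<beta> i = M$None$(Some i)" for i
  define g where "g i = (\<chi> j. M$j$(Some i))" for i
  define p0 where "p0 = projd (M *v lift1 x0)"
  define B where "B = (\<Sum>i\<in>UNIV. \<bar>\<beta> i\<bar>)"
  define r where "r = \<bar>d\<bar> / (B + 1)"
  have dnz: "d \<noteq> 0" using d0 d_def by simp
  have B0: "B \<ge> 0" unfolding B_def by (simp add: sum_nonneg)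
  have r0: "r > 0" using dnz B0 by (simp add: r_def)
  define cnt :: "'d option \<times> 'd list \<Rightarrow> 'd \<Rightarrow> nat" where
    "cnt t = (\<lambda>i. count_list (snd t) i + (if fst t = Some i then 1 else 0))" for t
  define c :: "'d option \<times> 'd list \<Rightarrow> real^'d" where
    "c t = (1/d * prod_list (map (\<lambda>i. - \<beta> i / d) (snd t))) *\<^sub>R
       (case fst t of None \<Rightarrow> p0 | Some i \<Rightarrow> projd (g i))" for t
  define a where "a \<alpha> = sum c {t\<in>UNIV. cnt t = \<alpha>}" for \<alpha>
  have fib: "finite {t\<in>UNIV. cnt t = \<alpha>}" for \<alpha>
  proof -
    have "{t\<in>UNIV. cnt t = \<alpha>} \<subseteq> UNIV \<times> {w. length w \<le> (\<Sum>i\<in>UNIV. \<alpha> i)}"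
    proof (rule subsetI)
      fix t assume "t \<in> {t\<in>UNIV. cnt t = \<alpha>}"
      then have "count_list (snd t) i \<le> \<alpha> i" for i unfolding cnt_def by (auto dest!: fun_cong[of _ _ i])
      then have "length (snd t) \<le> (\<Sum>i\<in>UNIV. \<alpha> i)" unfolding len_count[of "snd t"] by (intro sum_mono) auto
      then show "t \<in> UNIV \<times> {w. length w \<le> (\<Sum>i\<in>UNIV. \<alpha> i)}" by (cases t) auto
    qed
    moreover have "finite ((UNIV::'d option set) \<times> {w::'d list. length w \<le> (\<Sum>i\<in>UNIV. \<alpha> i)})"
      by (intro finite_cartesian_product fin_len_le) simp
    ultimately show ?thesis by (rule finite_subset)
  qed
  show ?thesis
  proof (intro exI[of _ r] conjI r0 exI[of _ a] ballI)
    fix y assume y: "y \<in> ball x0 r"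
    define h where "h i = y$i - x0$i" for i
    define x where "x i = - (\<beta> i * h i) / d" for i
    have hr: "\<bar>h i\<bar> < r" for i
    proof -
      have "\<bar>h i\<bar> = \<bar>(y - x0)$i\<bar>" by (simp add: h_def)
      also have "\<dots> \<le> norm (y - x0)" by (rule component_le_norm_cart)
      also have "\<dots> < r" using y by (simp add: dist_norm norm_minus_commute)
      finally show ?thesis .
    qed
    have sx: "(\<Sum>i\<in>UNIV. \<bar>x i\<bar>) < 1"
    proof -
      have "(\<Sum>i\<in>UNIV. \<bar>x i\<bar>) = (\<Sum>i\<in>UNIV. \<bar>\<beta> i\<bar> * \<bar>h i\<bar>) / \<bar>d\<bar>"
        by (simp add: x_def abs_mult sum_divide_distrib)
      also have "\<dots> \<le> (\<Sum>i\<in>UNIV. \<bar>\<beta> i\<bar> * r) / \<bar>d\<bar>"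
        using hr by (intro divide_right_mono sum_mono mult_left_mono) (auto intro: less_imp_le)
      also have "\<dots> = B * r / \<bar>d\<bar>" by (simp add: B_def sum_distrib_right)
      also have "\<dots> = B / (B + 1)" using dnz B0 by (simp add: r_def)
      also have "\<dots> < 1" using B0 by simp
      finally show ?thesis .
    qed
    have N: "M *v lift1 y = M *v lift1 x0 + (\<Sum>i\<in>UNIV. h i *\<^sub>R g i)"
      by (simp add: vec_eq_iff Mv_lift1 g_def h_def algebra_simps sum.distrib sum_subtractf)
    define D where "D = (M *v lift1 y) $ None"
    have D: "D = d * (1 - sum x UNIV)"
      using N d0 by (simp add: D_def d_def g_def x_def \<beta>_def algebra_simps sum_divide_distrib sum_distrib_left sum_negf)
    have Dnz: "D \<noteq> 0"
    proof -
      have "\<bar>sum x UNIV\<bar> < 1" using sum_abs[of x UNIV] sx by linarith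
      then show ?thesis using D dnz by auto
    qed
    have geo: "((\<lambda>w. prod_list (map x w)) has_sum (1 / (1 - sum x UNIV))) UNIV"
      by (rule geo_lists[OF sx])
    define trm where "trm t = (\<Prod>i\<in>UNIV. h i ^ (cnt t i)) *\<^sub>R c t" for t
    have pl: "prod_list (map (\<lambda>i. - \<beta> i / d) w) * (\<Prod>i\<in>UNIV. h i ^ count_list w i) = prod_list (map x w)" for w
      by (simp add: prod_list_count[symmetric] prod_list_mult[symmetric] x_def[abs_def])
    have sl: "((\<lambda>w. trm (o', w)) has_sum
          (case o' of None \<Rightarrow> (1/D) *\<^sub>R p0 | Some i \<Rightarrow> (h i / D) *\<^sub>R projd (g i))) UNIV" for o'
    proof (cases o')
      case None
      have "((\<lambda>w. (1/d * prod_list (map x w)) *\<^sub>R p0) has_sum ((1/d * (1 / (1 - sum x UNIV))) *\<^sub>R p0)) UNIV"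
        by (rule has_sum_bounded_linear[OF bounded_linear_scaleR_left[of p0] has_sum_cmult_right[OF geo, of "1/d"]])
      moreover have "trm (o', w) = (1/d * prod_list (map x w)) *\<^sub>R p0" for w
        using None pl[of w] by (simp add: trm_def cnt_def c_def mult_ac)
      moreover have "1/d * (1 / (1 - sum x UNIV)) = 1/D" using D by simp
      ultimately show ?thesis using None by simp
    next
      case (Some k)
      have "((\<lambda>w. (h k / d * prod_list (map x w)) *\<^sub>R projd (g k)) has_sum ((h k / d * (1 / (1 - sum x UNIV))) *\<^sub>R projd (g k))) UNIV"
        by (rule has_sum_bounded_linear[OF bounded_linear_scaleR_left[of "projd (g k)"] has_sum_cmult_right[OF geo, of "h k / d"]])
      moreover have "trm (o', w) = (h k / d * prod_list (map x w)) *\<^sub>R projd (g k)" for w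
      proof -
        have "(\<Prod>i\<in>UNIV. h i ^ (count_list w i + (if Some k = Some i then 1 else 0)))
            = (\<Prod>i\<in>UNIV. h i ^ count_list w i) * (\<Prod>i\<in>UNIV. if k = i then h i else 1)"
          by (subst prod.distrib[symmetric]) (intro prod.cong, auto simp: power_add)
        also have "\<dots> = (\<Prod>i\<in>UNIV. h i ^ count_list w i) * h k" by (simp add: prod.delta)
        finally have "(\<Prod>i\<in>UNIV. h i ^ (count_list w i + (if Some k = Some i then 1 else 0))) = (\<Prod>i\<in>UNIV. h i ^ count_list w i) * h k" .
        then show ?thesis using Some pl[of w]
          by (simp add: trm_def cnt_def c_def) (simp add: mult_ac)
      qed
      ultimately show ?thesis using Some by (simp add: D)
    qed
    have tot: "(trm has_sum (\<Sum>o'\<in>UNIV. case o' of None \<Rightarrow> (1/D) *\<^sub>R p0 | Some i \<Rightarrow> (h i / D) *\<^sub>R projd (g i))) (UNIV \<times> UNIV)"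
      by (rule has_sum_prod_finite) (use sl in auto)
    have val: "(\<Sum>o'\<in>UNIV. case o' of None \<Rightarrow> (1/D) *\<^sub>R p0 | Some i \<Rightarrow> (h i / D) *\<^sub>R projd (g i)) = fA M y"
    proof -
      have "(\<Sum>o'\<in>UNIV. case o' of None \<Rightarrow> (1/D) *\<^sub>R p0 | Some i \<Rightarrow> (h i / D) *\<^sub>R projd (g i))
          = (1/D) *\<^sub>R p0 + (\<Sum>i\<in>UNIV. (h i / D) *\<^sub>R projd (g i))"
        by (simp add: sum_option_UNIV)
      also have "\<dots> = (1/D) *\<^sub>R (p0 + (\<Sum>i\<in>UNIV. h i *\<^sub>R projd (g i)))"
        by (simp add: scaleR_add_right scaleR_sum_right)
      also have "p0 + (\<Sum>i\<in>UNIV. h i *\<^sub>R projd (g i)) = projd (M *v lift1 y)"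
        unfolding N by (simp add: vec_eq_iff p0_def)
      also have "(1/D) *\<^sub>R projd (M *v lift1 y) = fA M y"
        by (simp add: vec_eq_iff fA_def D_def)
      finally show ?thesis .
    qed
    have "((\<lambda>\<alpha>. sum trm {t\<in>UNIV. cnt t = \<alpha>}) has_sum fA M y) UNIV"
      using has_sum_group[OF tot[unfolded val UNIV_Times_UNIV], of cnt] fib by simp
    moreover have "sum trm {t\<in>UNIV. cnt t = \<alpha>} = (\<Prod>i\<in>UNIV. (y $ i - x0 $ i) ^ (\<alpha> i)) *\<^sub>R a \<alpha>" for \<alpha>
      unfolding a_def scaleR_sum_right by (intro sum.cong) (auto simp: trm_def h_def)
    ultimately show "((\<lambda>\<alpha>. (\<Prod>i\<in>UNIV. (y $ i - x0 $ i) ^ (\<alpha> i)) *\<^sub>R a \<alpha>) has_sum fA M y) UNIV"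
      by simp
  qed
qed


definition Osc :: "real^'n::finite \<Rightarrow> real^'n \<Rightarrow> real \<Rightarrow> bool" where
  "Osc q c E \<longleftrightarrow> (\<exists>m. \<forall>j. m * q$j \<le> c$j \<and> c$j \<le> (m + E) * q$j)"

lemma mv_nth: "(P *v q) $ j = (\<Sum>k\<in>UNIV. P$j$k * q$k)"
  by (simp add: matrix_vector_mult_def)

lemma osc_step:
  fixes P :: "real^'n::finite^'n"
  assumes Pb: "\<And>j k. pmin \<le> P$j$k" "\<And>j k. P$j$k \<le> pmax"
    and pmin: "pmin > 0" and \<rho>: "0 < \<rho>" "\<rho> * pmax \<le> pmin"
    and q0: "\<And>k. q$k \<ge> 0" and osc: "Osc q c E"
  shows "Osc (P *v q) (P *v c) ((1 - \<rho>) * E)"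
proof -
  obtain m where m: "\<And>j. m * q$j \<le> c$j" "\<And>j. c$j \<le> (m + E) * q$j"
    using osc unfolding Osc_def by blast
  define \<alpha> where "\<alpha> = (\<Sum>k\<in>UNIV. q$k)"
  define S where "S = (\<Sum>k\<in>UNIV. c$k - m * q$k)"
  have \<alpha>0: "\<alpha> \<ge> 0" unfolding \<alpha>_def using q0 by (simp add: sum_nonneg)
  have S0: "S \<ge> 0" unfolding S_def using m(1) by (intro sum_nonneg) (simp add: algebra_simps)
  have ES: "E * \<alpha> - S = (\<Sum>k\<in>UNIV. (m + E) * q$k - c$k)"
    unfolding S_def \<alpha>_def by (simp add: sum_subtractf sum_distrib_left algebra_simps sum.distrib)
  have ES0: "E * \<alpha> - S \<ge> 0" unfolding ES using m(2) by (intro sum_nonneg) (simp add: algebra_simps)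
  show ?thesis
  proof (cases "\<alpha> = 0")
    case True
    then have "\<forall>k\<in>UNIV. q$k = 0" unfolding \<alpha>_def using q0 by (subst sum_nonneg_eq_0_iff[symmetric]) auto
    then have qz: "q$k = 0" for k by simp
    then have "c$k = 0" for k using m(1)[of k] m(2)[of k] by simp
    then show ?thesis using qz unfolding Osc_def by (intro exI[of _ 0]) (simp add: mv_nth)
  next
    case False
    then have \<alpha>p: "\<alpha> > 0" using \<alpha>0 by simp
    define m' where "m' = m + \<rho> * S / \<alpha>"
    have Pq: "(P *v q)$j \<le> pmax * \<alpha>" for j
      unfolding mv_nth \<alpha>_def sum_distrib_left using Pb(2) q0 by (intro sum_mono mult_right_mono) auto
    have Pq0: "(P *v q)$j \<ge> 0" for j
      unfolding mv_nth using Pb(1) pmin q0 by (intro sum_nonneg mult_nonneg_nonneg) (auto intro: order.trans[OF less_imp_le[OF pmin]])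
    have lowj: "m' * (P *v q)$j \<le> (P *v c)$j" for j
    proof -
      have "(P *v c)$j - m * (P *v q)$j = (\<Sum>k\<in>UNIV. P$j$k * (c$k - m * q$k))"
        by (simp add: mv_nth sum_subtractf sum_distrib_left algebra_simps)
      also have "\<dots> \<ge> (\<Sum>k\<in>UNIV. pmin * (c$k - m * q$k))"
        using Pb(1) m(1) by (intro sum_mono mult_right_mono) (auto simp: algebra_simps)
      finally have 1: "(P *v c)$j - m * (P *v q)$j \<ge> pmin * S" by (simp add: S_def sum_distrib_left)
      have "\<rho> * S / \<alpha> * (P *v q)$j \<le> \<rho> * S / \<alpha> * (pmax * \<alpha>)"
        using Pq[of j] \<rho> S0 \<alpha>p by (intro mult_left_mono) auto
      also have "\<dots> = (\<rho> * pmax) * S" using \<alpha>p by simp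
      also have "\<dots> \<le> pmin * S" using \<rho> S0 by (intro mult_right_mono) auto
      finally show ?thesis using 1 by (simp add: m'_def algebra_simps)
    qed
    have upj: "(P *v c)$j \<le> (m' + (1 - \<rho>) * E) * (P *v q)$j" for j
    proof -
      have "(m + E) * (P *v q)$j - (P *v c)$j = (\<Sum>k\<in>UNIV. P$j$k * ((m + E) * q$k - c$k))"
        by (simp add: mv_nth sum_subtractf sum_distrib_left algebra_simps)
      also have "\<dots> \<ge> (\<Sum>k\<in>UNIV. pmin * ((m + E) * q$k - c$k))"
        using Pb(1) m(2) by (intro sum_mono mult_right_mono) (auto simp: algebra_simps)
      finally have 1: "(m + E) * (P *v q)$j - (P *v c)$j \<ge> pmin * (E * \<alpha> - S)" by (simp add: ES sum_distrib_left)
      have "\<rho> / \<alpha> * (E * \<alpha> - S) * (P *v q)$j \<le> \<rho> / \<alpha> * (E * \<alpha> - S) * (pmax * \<alpha>)"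
        using Pq[of j] \<rho> ES0 \<alpha>p by (intro mult_left_mono) auto
      also have "\<dots> = (\<rho> * pmax) * (E * \<alpha> - S)" using \<alpha>p by simp
      also have "\<dots> \<le> pmin * (E * \<alpha> - S)" using \<rho> ES0 by (intro mult_right_mono) auto
      finally have 2: "\<rho> / \<alpha> * (E * \<alpha> - S) * (P *v q)$j \<le> pmin * (E * \<alpha> - S)" .
      have "\<rho> / \<alpha> * (E * \<alpha> - S) = \<rho> * E - \<rho> * S / \<alpha>" using \<alpha>p by (simp add: field_simps)
      then show ?thesis using 1 2 by (simp add: m'_def algebra_simps)
    qed
    show ?thesis unfolding Osc_def using lowj upj by blast
  qed
qed

lemma osc_first:
  fixes P :: "real^'n::finite^'n"
  assumes Pb: "\<And>j k. pmin \<le> P$j$k" "\<And>j k. P$j$k \<le> pmax"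
    and pmin: "pmin > 0" and a0: "\<And>k. a$k \<ge> 0" and sa: "sa > 0" "sa \<le> (\<Sum>k\<in>UNIV. a$k)"
  shows "Osc (P *v a) (P *v b) (2 * (pmax * (\<Sum>k\<in>UNIV. \<bar>b$k\<bar>) / (pmin * sa)))"
proof -
  define nb where "nb = (\<Sum>k\<in>UNIV. \<bar>b$k\<bar>)"
  define K where "K = pmax * nb / (pmin * sa)"
  have pmax: "pmax > 0" using Pb pmin by (meson less_le_trans)
  have nb0: "nb \<ge> 0" unfolding nb_def by (simp add: sum_nonneg)
  have Pa: "(P *v a)$j \<ge> pmin * sa" for j
  proof -
    have "pmin * sa \<le> pmin * (\<Sum>k\<in>UNIV. a$k)" using sa pmin by simp
    also have "\<dots> \<le> (P *v a)$j"
      unfolding mv_nth sum_distrib_left using Pb(1) a0 by (intro sum_mono mult_right_mono) auto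
    finally show ?thesis .
  qed
  have Pb': "\<bar>(P *v b)$j\<bar> \<le> pmax * nb" for j
  proof -
    have "\<bar>(P *v b)$j\<bar> \<le> (\<Sum>k\<in>UNIV. \<bar>P$j$k * b$k\<bar>)" unfolding mv_nth by (rule sum_abs)
    also have "\<dots> \<le> (\<Sum>k\<in>UNIV. pmax * \<bar>b$k\<bar>)"
    proof (intro sum_mono)
      fix k
      have "P$j$k \<ge> 0" using Pb(1)[of j k] pmin by linarith
      then have "\<bar>P$j$k * b$k\<bar> = P$j$k * \<bar>b$k\<bar>" by (simp add: abs_mult)
      also have "\<dots> \<le> pmax * \<bar>b$k\<bar>" using Pb(2)[of j k] by (intro mult_right_mono) auto
      finally show "\<bar>P$j$k * b$k\<bar> \<le> pmax * \<bar>b$k\<bar>" .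
    qed
    finally show ?thesis by (simp add: nb_def sum_distrib_left)
  qed
  have KPa: "pmax * nb \<le> K * (P *v a)$j" for j
  proof -
    have "pmax * nb = K * (pmin * sa)" using pmin sa by (simp add: K_def)
    also have "\<dots> \<le> K * (P *v a)$j" using Pa[of j] pmin sa pmax nb0 by (intro mult_left_mono) (auto simp: K_def)
    finally show ?thesis .
  qed
  show ?thesis unfolding Osc_def
  proof (intro exI[of _ "-K"] allI conjI)
    fix j
    show "- K * (P *v a)$j \<le> (P *v b)$j" using KPa[of j] Pb'[of j] by linarith
    show "(P *v b)$j \<le> (- K + 2 * (pmax * (\<Sum>k\<in>UNIV. \<bar>b$k\<bar>) / (pmin * sa))) * (P *v a)$j"
    proof -
      have "(- K + 2 * (pmax * (\<Sum>k\<in>UNIV. \<bar>b$k\<bar>) / (pmin * sa))) = K" by (simp add: K_def nb_def)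
      then show ?thesis using KPa[of j] Pb'[of j] by simp
    qed
  qed
qed

lemma osc_final:
  fixes q c w :: "real^'n::finite"
  assumes q0: "\<And>k. q$k \<ge> 0" and w0: "\<And>k. w$k \<ge> 0" and lq: "(\<Sum>k\<in>UNIV. w$k * q$k) > 0"
    and osc: "Osc q c E"
  shows "(\<Sum>j\<in>UNIV. \<bar>c$j - ((\<Sum>k\<in>UNIV. w$k * c$k) / (\<Sum>k\<in>UNIV. w$k * q$k)) * q$j\<bar>) \<le> E * (\<Sum>j\<in>UNIV. q$j)"
proof -
  obtain m where m: "\<And>j. m * q$j \<le> c$j" "\<And>j. c$j \<le> (m + E) * q$j"
    using osc unfolding Osc_def by blast
  define lq where "lq = (\<Sum>k\<in>UNIV. w$k * q$k)"
  define t where "t = (\<Sum>k\<in>UNIV. w$k * c$k) / lq"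
  have "m * lq \<le> (\<Sum>k\<in>UNIV. w$k * c$k)"
    unfolding lq_def sum_distrib_left using m(1) w0 by (intro sum_mono) (metis mult.left_commute mult_left_mono)
  then have t1: "m \<le> t" using lq unfolding t_def lq_def by (simp add: pos_le_divide_eq)
  have "(\<Sum>k\<in>UNIV. w$k * c$k) \<le> (m + E) * lq"
    unfolding lq_def sum_distrib_left using m(2) w0 by (intro sum_mono) (metis mult.left_commute mult_left_mono)
  then have t2: "t \<le> m + E" using lq unfolding t_def lq_def by (simp add: pos_divide_le_eq)
  have "\<bar>c$j - t * q$j\<bar> \<le> E * q$j" for j
  proof -
    have "c$j - t * q$j \<le> (m + E - t) * q$j" using m(2)[of j] by (simp add: algebra_simps)
    also have "\<dots> \<le> E * q$j" using t1 q0[of j] by (intro mult_right_mono) auto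
    finally have a: "c$j - t * q$j \<le> E * q$j" .
    have "(t - m) * q$j \<le> E * q$j" using t2 q0[of j] by (intro mult_right_mono) auto
    then have b: "-(c$j - t * q$j) \<le> E * q$j" using m(1)[of j] by (simp add: algebra_simps)
    show ?thesis using a b by linarith
  qed
  then show ?thesis unfolding t_def lq_def[symmetric] sum_distrib_left by (intro sum_mono) auto
qed

lemma osc_mono: "Osc q c E \<Longrightarrow> E \<le> E' \<Longrightarrow> (\<And>k. q$k \<ge> 0) \<Longrightarrow> Osc q c E'"
  unfolding Osc_def by (meson add_left_mono mult_right_mono order_trans)


definition embd :: "real^'d::finite \<Rightarrow> real^('d option)" where
  "embd h = (\<chi> j. case j of None \<Rightarrow> 0 | Some i \<Rightarrow> h $ i)"

lemma embd_None[simp]: "embd h $ None = 0" and embd_Some[simp]: "embd h $ Some i = h $ i"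
  by (simp_all add: embd_def)

lemma linear_embd: "linear embd"
  by (rule linearI) (auto simp: vec_eq_iff embd_def split: option.splits)

lemma linear_projd: "linear projd"
  by (rule linearI) (auto simp: vec_eq_iff)

lemma bl_projd: "bounded_linear projd"
  using linear_projd linear_conv_bounded_linear by blast

lemma lift1_embd: "lift1 y = lift1 0 + embd y"
  by (auto simp: vec_eq_iff lift1_def embd_def split: option.splits)

definition Dfa :: "real^('d::finite option)^('d option) \<Rightarrow> real^'d \<Rightarrow> real^'d \<Rightarrow> real^'d" where
  "Dfa M x h = projd ((1 / (M *v lift1 x)$None) *\<^sub>R
     ((M *v embd h) - ((M *v embd h)$None / (M *v lift1 x)$None) *\<^sub>R (M *v lift1 x)))"

lemma fA_deriv:
  fixes M :: "real^('d::finite option)^('d option)"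
  assumes d: "(M *v lift1 x)$None \<noteq> 0"
  shows "(fA M has_derivative Dfa M x) (at x)"
proof -
  have bl: "bounded_linear (\<lambda>h. M *v embd h)"
    using linear_compose[OF linear_embd matrix_vector_mul_linear[of M]] linear_conv_bounded_linear
    by (metis (no_types, lifting) comp_apply ext)
  have N: "((\<lambda>y. M *v lift1 y) has_derivative (\<lambda>h. M *v embd h)) (at x)"
  proof -
    have "((\<lambda>y. M *v embd y + M *v lift1 0) has_derivative (\<lambda>h. M *v embd h)) (at x)"
      by (rule has_derivative_add_const[OF bounded_linear_imp_has_derivative[OF bl]])
    moreover have "(\<lambda>y. M *v embd y + M *v lift1 0) = (\<lambda>y. M *v lift1 y)"
      by (subst (2) lift1_embd) (simp add: matrix_vector_right_distrib add.commute)
    ultimately show ?thesis by simp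
  qed
  have Dn: "((\<lambda>y. (M *v lift1 y)$None) has_derivative (\<lambda>h. (M *v embd h)$None)) (at x)"
    by (rule bounded_linear.has_derivative[OF bounded_linear_vec_nth N])
  have I: "((\<lambda>y. inverse ((M *v lift1 y)$None)) has_derivative
      (\<lambda>h. - (inverse ((M *v lift1 x)$None) * (M *v embd h)$None * inverse ((M *v lift1 x)$None)))) (at x)"
    by (rule Deriv.has_derivative_inverse[OF d Dn])
  have S: "((\<lambda>y. inverse ((M *v lift1 y)$None) *\<^sub>R (M *v lift1 y)) has_derivative
      (\<lambda>h. inverse ((M *v lift1 x)$None) *\<^sub>R (M *v embd h) +
          (- (inverse ((M *v lift1 x)$None) * (M *v embd h)$None * inverse ((M *v lift1 x)$None))) *\<^sub>R (M *v lift1 x))) (at x)"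
    by (rule has_derivative_scaleR[OF I N])
  have P: "((\<lambda>y. projd (inverse ((M *v lift1 y)$None) *\<^sub>R (M *v lift1 y))) has_derivative
      (\<lambda>h. projd (inverse ((M *v lift1 x)$None) *\<^sub>R (M *v embd h) +
          (- (inverse ((M *v lift1 x)$None) * (M *v embd h)$None * inverse ((M *v lift1 x)$None))) *\<^sub>R (M *v lift1 x)))) (at x)"
    by (rule bounded_linear.has_derivative[OF bl_projd S])
  have e1: "(\<lambda>y. projd (inverse ((M *v lift1 y)$None) *\<^sub>R (M *v lift1 y))) = fA M"
    by (auto simp: fA_def divide_inverse)
  have e2: "(\<lambda>h. projd (inverse ((M *v lift1 x)$None) *\<^sub>R (M *v embd h) +
          (- (inverse ((M *v lift1 x)$None) * (M *v embd h)$None * inverse ((M *v lift1 x)$None))) *\<^sub>R (M *v lift1 x))) = Dfa M x"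
    by (auto simp: Dfa_def vec_eq_iff field_simps power2_eq_square)
  show ?thesis using P unfolding e1 e2 .
qed

definition prj :: "real^('d::finite option) \<Rightarrow> real^'d" where
  "prj z = projd ((1 / z$None) *\<^sub>R z)"

lemma fA_prj: "fA M x = prj (M *v lift1 x)"
  by (simp add: fA_def prj_def)

lemma prj_scale: "s \<noteq> 0 \<Longrightarrow> prj (s *\<^sub>R z) = prj z"
  by (auto simp: prj_def vec_eq_iff)

lemma lift1_prj: "z$None \<noteq> 0 \<Longrightarrow> lift1 (prj z) = (1 / z$None) *\<^sub>R z"
  by (auto simp: prj_def vec_eq_iff lift1_def split: option.splits)

lemma fA_comp:
  assumes "(B *v lift1 y)$None \<noteq> 0"
  shows "fA A (fA B y) = fA (A ** B) y"
proof -
  have "fA A (fA B y) = prj (A *v ((1 / (B *v lift1 y)$None) *\<^sub>R (B *v lift1 y)))"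
    using assms by (simp add: fA_prj lift1_prj)
  also have "\<dots> = prj ((1 / (B *v lift1 y)$None) *\<^sub>R ((A ** B) *v lift1 y))"
    by (simp add: matrix_vector_mul_assoc matrix_vector_mult_scaleR)
  also have "\<dots> = fA (A ** B) y" using assms by (simp add: prj_scale fA_prj)
  finally show ?thesis .
qed

definition Bw :: "('i \<Rightarrow> real^('d::finite option)^('d option)) \<Rightarrow> 'i list \<Rightarrow> real^('d option)^('d option)" where
  "Bw A ws = foldr (\<lambda>i M. A i ** M) ws (mat 1)"

lemma Bw_simps[simp]: "Bw A [] = mat 1" "Bw A (i # ws) = A i ** Bw A ws"
  by (simp_all add: Bw_def)

lemma fword_simps[simp]: "fword A [] = id" "fword A (i # ws) = fA (A i) \<circ> fword A ws"
  by (simp_all add: fword_def)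

lemma fA_id: "fA (mat 1) y = y"
  by (simp add: fA_def vec_eq_iff)

lemma fword_eq:
  assumes "\<forall>k\<le>length ws. (Bw A (drop k ws) *v lift1 y)$None \<noteq> 0"
  shows "fword A ws y = fA (Bw A ws) y"
  using assms
proof (induction ws)
  case Nil then show ?case by (simp add: fA_id)
next
  case (Cons i ws)
  have "\<forall>k\<le>length ws. (Bw A (drop k ws) *v lift1 y)$None \<noteq> 0"
  proof (intro allI impI)
    fix k assume "k \<le> length ws"
    then show "(Bw A (drop k ws) *v lift1 y)$None \<noteq> 0" using Cons.prems[rule_format, of "Suc k"] by simp
  qed
  then have "fword A ws y = fA (Bw A ws) y" by (rule Cons.IH)
  moreover have "(Bw A ws *v lift1 y)$None \<noteq> 0" using Cons.prems[rule_format, of 1] by simp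
  ultimately show ?case by (simp add: fA_comp matrix_mul_assoc)
qed

lemma open_good: "open {y. \<forall>k\<le>length ws. (Bw A (drop k ws) *v lift1 y)$None \<noteq> 0}"
proof -
  have "{y. \<forall>k\<le>length ws. (Bw A (drop k ws) *v lift1 y)$None \<noteq> 0}
      = (\<Inter>k\<in>{..length ws}. {y. (Bw A (drop k ws) *v lift1 y)$None \<noteq> 0})" by auto
  also have "open \<dots>"
  proof (rule open_INT)
    show "\<forall>k\<in>{..length ws}. open {y. (Bw A (drop k ws) *v lift1 y)$None \<noteq> 0}"
    proof
      fix k
      show "open {y. (Bw A (drop k ws) *v lift1 y)$None \<noteq> 0}"
        unfolding Mv_lift1 by (intro open_Collect_neq continuous_intros)
    qed
  qed simp
  finally show ?thesis .
qed

lemma fword_deriv: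
  assumes "\<forall>k\<le>length ws. (Bw A (drop k ws) *v lift1 x)$None \<noteq> 0"
  shows "(fword A ws has_derivative Dfa (Bw A ws) x) (at x)"
proof -
  have "(fA (Bw A ws) has_derivative Dfa (Bw A ws) x) (at x)"
    by (rule fA_deriv) (use assms[rule_format, of 0] in simp)
  then show ?thesis
    by (rule has_derivative_transform_within_open[OF _ open_good[of ws A]])
       (use assms in \<open>simp_all add: fword_eq[symmetric]\<close>)
qed


definition Tm :: "('n::finite \<Rightarrow> real^'n) \<Rightarrow> real^'n^'n" where
  "Tm v = (\<chi> i j. v j $ i)"

lemma Tm_mult: "Tm v *v c = (\<Sum>k\<in>UNIV. c$k *\<^sub>R v k)"
  by (simp add: vec_eq_iff Tm_def matrix_vector_mult_def mult.commute)

lemma Tm_inj: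
  assumes "inj v" "independent (range v)" "Tm v *v c = 0"
  shows "c = 0"
proof (rule ccontr)
  assume "c \<noteq> 0"
  then obtain k where k: "c$k \<noteq> 0" by (auto simp: vec_eq_iff)
  define u where "u y = c $ (inv v y)" for y
  have "(\<Sum>y\<in>range v. u y *\<^sub>R y) = (\<Sum>k\<in>UNIV. c$k *\<^sub>R v k)"
    using assms(1) by (subst sum.reindex) (auto simp: u_def o_def)
  also have "\<dots> = 0" using assms(3) by (simp add: Tm_mult)
  finally have "(\<Sum>y\<in>range v. u y *\<^sub>R y) = 0" .
  moreover have "u (v k) \<noteq> 0" using k assms(1) by (simp add: u_def)
  ultimately have "dependent (range v)"
    by (subst real_vector.dependent_finite) auto
  then show False using assms(2) by simp
qed

lemma Tm_rinv:
  assumes "inj v" "independent (range v)"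
  shows "\<exists>Ti. Tm v ** Ti = mat 1"
proof -
  obtain B where "B ** Tm v = mat 1"
    using matrix_left_invertible_ker[of "Tm v"] Tm_inj[OF assms] by blast
  then show ?thesis using matrix_left_right_inverse by blast
qed

lemma simp_cone_Tm:
  fixes v :: "'d::finite option \<Rightarrow> real^('d option)"
  shows "simp_cone v = {Tm v *v c | c. \<forall>k. c$k \<ge> 0}"
proof safe
  fix y assume "y \<in> simp_cone v"
  then obtain c where "\<forall>k. c k \<ge> 0" "y = (\<Sum>k\<in>UNIV. c k *\<^sub>R v k)" by (auto simp: simp_cone_def)
  then show "\<exists>c. y = Tm v *v c \<and> (\<forall>k. 0 \<le> c $ k)"
    by (intro exI[of _ "\<chi> k. c k"]) (simp add: Tm_mult)
next
  fix c :: "real^('d option)" assume "\<forall>k. c$k \<ge> 0"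
  then show "Tm v *v c \<in> simp_cone v"
    unfolding simp_cone_def Tm_mult by (intro CollectI exI[of _ "\<lambda>k. c$k"]) auto
qed

lemma interior_pos:
  fixes v :: "'d::finite option \<Rightarrow> real^('d option)"
  assumes "inj v" "independent (range v)" "y \<in> interior (simp_cone v)"
  shows "\<exists>p. (\<forall>j. p$j > 0) \<and> y = Tm v *v p"
proof -
  obtain e where e: "e > 0" "ball y e \<subseteq> simp_cone v" using assms(3) mem_interior by blast
  define one :: "real^('d option)" where "one = (\<chi> k. 1)"
  define ws where "ws = Tm v *v one"
  have "ws \<noteq> 0"
  proof
    assume "ws = 0"
    then have "one = 0" using Tm_inj[OF assms(1,2), of one] ws_def by simp
    then show False by (simp add: one_def vec_eq_iff)
  qed
  then have nw: "norm ws > 0" by simp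
  define t where "t = e / (2 * norm ws)"
  have t0: "t > 0" using e nw by (simp add: t_def)
  have "y - t *\<^sub>R ws \<in> ball y e"
    using e nw by (simp add: dist_norm t_def)
  then have "y - t *\<^sub>R ws \<in> simp_cone v" using e by blast
  then obtain c where c: "\<forall>k. c$k \<ge> 0" "y - t *\<^sub>R ws = Tm v *v c" by (auto simp: simp_cone_Tm)
  have "y = Tm v *v (c + t *\<^sub>R one)"
    using c(2) by (simp add: ws_def matrix_vector_right_distrib matrix_vector_mult_scaleR algebra_simps)
  moreover have "\<forall>j. (c + t *\<^sub>R one)$j > 0" using c(1) t0 by (simp add: one_def add_nonneg_pos)
  ultimately show ?thesis by blast
qed


lemma pos_step:
  fixes P :: "real^'n::finite^'n"
  assumes "\<And>j k. pmin \<le> P$j$k" "pmin > 0" "\<And>k. q$k \<ge> 0"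
  shows "(P *v q)$j \<ge> pmin * (\<Sum>k\<in>UNIV. q$k)"
  unfolding mv_nth sum_distrib_left using assms by (intro sum_mono mult_right_mono) auto

lemma Bw_nonneg:
  fixes P :: "'i \<Rightarrow> real^('d::finite option)^('d option)"
  assumes Pb: "\<And>i j k. i \<in> \<Lambda> \<Longrightarrow> pmin \<le> P i$j$k" and pmin: "pmin > 0" and a0: "\<And>k. a$k \<ge> 0"
  shows "set ws \<subseteq> \<Lambda> \<Longrightarrow> (Bw P ws *v a)$k \<ge> 0"
proof (induction ws arbitrary: k)
  case Nil then show ?case using a0 by simp
next
  case (Cons i ws)
  have "(Bw P (i#ws) *v a)$k = (P i *v (Bw P ws *v a))$k" by (simp add: matrix_vector_mul_assoc)
  also have "\<dots> \<ge> pmin * (\<Sum>k\<in>UNIV. (Bw P ws *v a)$k)"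
    using Cons by (intro pos_step[OF Pb pmin]) auto
  also have "pmin * (\<Sum>k\<in>UNIV. (Bw P ws *v a)$k) \<ge> 0"
    using Cons pmin by (intro mult_nonneg_nonneg sum_nonneg) auto
  finally show ?case by simp
qed

lemma Bw_sumpos:
  fixes P :: "'i \<Rightarrow> real^('d::finite option)^('d option)"
  assumes Pb: "\<And>i j k. i \<in> \<Lambda> \<Longrightarrow> pmin \<le> P i$j$k" and pmin: "pmin > 0" and a0: "\<And>k. a$k \<ge> 0"
    and sa: "(\<Sum>k\<in>UNIV. a$k) > 0"
  shows "set ws \<subseteq> \<Lambda> \<Longrightarrow> (\<Sum>k\<in>UNIV. (Bw P ws *v a)$k) > 0"
proof (induction ws)
  case Nil then show ?case using sa by simp
next
  case (Cons i ws)
  have "0 < pmin * (\<Sum>k\<in>UNIV. (Bw P ws *v a)$k)" using Cons pmin by simp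
  also have "\<dots> \<le> (P i *v (Bw P ws *v a))$k" for k
    using Cons by (intro pos_step[OF Pb pmin] Bw_nonneg[OF Pb pmin a0]) auto
  finally have "(P i *v (Bw P ws *v a))$k > 0" for k .
  then have "(\<Sum>k\<in>UNIV. (P i *v (Bw P ws *v a))$k) > 0" by (intro sum_pos) auto
  then show ?case by (simp add: matrix_vector_mul_assoc)
qed

lemma osc_chain:
  fixes P :: "'i \<Rightarrow> real^('d::finite option)^('d option)"
  assumes Pb: "\<And>i j k. i \<in> \<Lambda> \<Longrightarrow> pmin \<le> P i$j$k" "\<And>i j k. i \<in> \<Lambda> \<Longrightarrow> P i$j$k \<le> pmax"
    and pmin: "pmin > 0" and \<rho>: "0 < \<rho>" "\<rho> * pmax \<le> pmin"
    and a0: "\<And>k. a$k \<ge> 0" and sa: "sa > 0" "sa \<le> (\<Sum>k\<in>UNIV. a$k)"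
  shows "set ws \<subseteq> \<Lambda> \<Longrightarrow> ws \<noteq> [] \<Longrightarrow>
    Osc (Bw P ws *v a) (Bw P ws *v b) (2 * (pmax * (\<Sum>k\<in>UNIV. \<bar>b$k\<bar>) / (pmin * sa)) * (1 - \<rho>) ^ (length ws - 1))"
proof (induction ws)
  case Nil then show ?case by simp
next
  case (Cons i ws)
  have i: "i \<in> \<Lambda>" using Cons by simp
  show ?case
  proof (cases "ws = []")
    case True
    then show ?thesis
      using osc_first[of pmin "P i" pmax a sa b] Pb[OF i] pmin a0 sa by simp
  next
    case False
    have IH: "Osc (Bw P ws *v a) (Bw P ws *v b) (2 * (pmax * (\<Sum>k\<in>UNIV. \<bar>b$k\<bar>) / (pmin * sa)) * (1 - \<rho>) ^ (length ws - 1))"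
      using Cons False by simp
    have "Osc (P i *v (Bw P ws *v a)) (P i *v (Bw P ws *v b)) ((1 - \<rho>) * (2 * (pmax * (\<Sum>k\<in>UNIV. \<bar>b$k\<bar>) / (pmin * sa)) * (1 - \<rho>) ^ (length ws - 1)))"
      by (rule osc_step[OF Pb(1)[OF i] Pb(2)[OF i] pmin \<rho> _ IH]) (use Bw_nonneg[OF Pb(1) pmin a0] Cons in auto)
    moreover have "(1 - \<rho>) * (1 - \<rho>) ^ (length ws - 1) = (1 - \<rho>) ^ (length (i # ws) - 1)"
      using False by (cases ws) auto
    then have "(1 - \<rho>) * (2 * (pmax * (\<Sum>k\<in>UNIV. \<bar>b$k\<bar>) / (pmin * sa)) * (1 - \<rho>) ^ (length ws - 1))
       = 2 * (pmax * (\<Sum>k\<in>UNIV. \<bar>b$k\<bar>) / (pmin * sa)) * (1 - \<rho>) ^ (length (i # ws) - 1)"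
      by (metis mult.left_commute)
    ultimately show ?thesis by (simp only: Bw_simps matrix_vector_mul_assoc)
  qed
qed


theorem lemma2p1:
  fixes \<Lambda> :: "'i set"
    and A :: "'i \<Rightarrow> real^('d::finite option)^('d option)"
    and v :: "'d option \<Rightarrow> real^('d option)"
  assumes fin: "finite \<Lambda>"
    and inv: "\<forall>i\<in>\<Lambda>. invertible (A i)"
    and indep: "inj v" "independent (range v)"
    and cone_pos: "simp_cone v \<subseteq> {y. y $ None > 0} \<union> {0}"
    and strict: "\<forall>i\<in>\<Lambda>. strictly_preserves (A i) (simp_cone v)"
  shows "(\<forall>i\<in>\<Lambda>. fA (A i) ` Vbar (simp_cone v) \<subseteq> Vbar (simp_cone v))
    \<and> (\<exists>U. open U \<and> Vbar (simp_cone v) \<subseteq> U \<and> (\<forall>i\<in>\<Lambda>. real_analytic_on (fA (A i)) U))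
    \<and> (\<exists>C \<gamma>. C > 0 \<and> 0 < \<gamma> \<and> \<gamma> < 1 \<and>
         (\<forall>n ws x. length ws = n \<longrightarrow> set ws \<subseteq> \<Lambda> \<longrightarrow> x \<in> Vbar (simp_cone v) \<longrightarrow>
            (\<exists>D. (fword A ws has_derivative D) (at x) \<and> onorm D \<le> C * \<gamma> ^ n)))"
proof -
  define T where "T = Tm v"
  obtain Ti where Ti: "T ** Ti = mat 1" using Tm_rinv[OF indep] T_def by blast
  have TTi: "T *v (Ti *v y) = y" for y by (simp add: matrix_vector_mul_assoc Ti)
  have cone: "simp_cone v = {T *v c | c. \<forall>k. c$k \<ge> 0}" by (simp add: simp_cone_Tm T_def)
  have Tinj: "T *v c = 0 \<Longrightarrow> c = 0" for c using Tm_inj[OF indep] T_def by blast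
  define wv :: "real^('d option)" where "wv = (\<chi> k. v k $ None)"
  have vk: "v k = T *v axis k 1" for k
  proof -
    have "T *v axis k 1 = (\<Sum>j\<in>UNIV. (if j = k then v j else 0))"
      unfolding T_def Tm_mult by (intro sum.cong) (auto simp: axis_def)
    then show ?thesis by simp
  qed
  have wpos: "wv$k > 0" for k
  proof -
    have "v k \<in> simp_cone v" unfolding cone vk by (auto simp: axis_def)
    moreover have "v k \<noteq> 0"
    proof
      assume "v k = 0"
      then have "axis k (1::real) = 0" using Tinj vk by metis
      then show False by (simp add: axis_eq_0_iff)
    qed
    ultimately show ?thesis using cone_pos by (auto simp: wv_def)
  qed
  have ell: "(T *v c)$None = (\<Sum>k\<in>UNIV. wv$k * c$k)" for c
    by (simp add: T_def Tm_def wv_def matrix_vector_mult_def)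
  have ex: "\<exists>p. (\<forall>j. p$j > 0) \<and> A i *v v k = T *v p" if i: "i \<in> \<Lambda>" for i k
  proof -
    have "v k \<in> simp_cone v - {0}"
    proof
      show "v k \<in> simp_cone v" unfolding cone vk by (auto simp: axis_def)
      show "v k \<notin> {0}" using wpos[of k] by (auto simp: wv_def)
    qed
    then have "A i *v v k \<in> interior (simp_cone v)"
      using strict i unfolding strictly_preserves_def by blast
    then show ?thesis using interior_pos[OF indep] T_def by blast
  qed
  define pp where "pp i k = (SOME p. (\<forall>j. p$j > 0) \<and> A i *v v k = T *v p)" for i k
  have pp: "(\<forall>j. pp i k $ j > 0) \<and> A i *v v k = T *v pp i k" if "i \<in> \<Lambda>" for i k
    unfolding pp_def by (rule someI_ex[OF ex[OF that]])
  define P where "P i = (\<chi> j k. pp i k $ j)" for i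
  have AT: "A i ** T = T ** P i" if i: "i \<in> \<Lambda>" for i
  proof -
    have "(A i ** T) $ j $ k = (T ** P i) $ j $ k" for j k
    proof -
      have "(A i ** T) $ j $ k = (A i *v v k) $ j"
        by (simp add: matrix_matrix_mult_def matrix_vector_mult_def T_def Tm_def)
      also have "\<dots> = (T *v pp i k) $ j" using pp[OF i] by simp
      also have "\<dots> = (T ** P i) $ j $ k"
        by (simp add: matrix_matrix_mult_def matrix_vector_mult_def P_def)
      finally show ?thesis .
    qed
    then show ?thesis by (simp add: vec_eq_iff)
  qed
  have Ppos: "P i $ j $ k > 0" if "i \<in> \<Lambda>" for i j k using pp[OF that] by (simp add: P_def)
  define Ent where "Ent = (\<lambda>(i,j,k). P i $ j $ k) ` (\<Lambda> \<times> UNIV \<times> UNIV)"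
  have fEnt: "finite (insert 1 Ent)" unfolding Ent_def using fin by simp
  define pmin where "pmin = Min (insert 1 Ent)"
  define pmax where "pmax = Max (insert 1 Ent)"
  have inEnt: "P i $ j $ k \<in> insert 1 Ent" if "i \<in> \<Lambda>" for i j k
    unfolding Ent_def using that by (intro insertI2 image_eqI[of _ _ "(i,j,k)"]) auto
  have pmin0: "pmin > 0" unfolding pmin_def using fEnt
    by (subst Min_gr_iff) (auto simp: Ent_def Ppos)
  have Pb1: "pmin \<le> P i $ j $ k" if "i \<in> \<Lambda>" for i j k
    unfolding pmin_def using fEnt inEnt[OF that] by (rule Min_le)
  have Pb2: "P i $ j $ k \<le> pmax" if "i \<in> \<Lambda>" for i j k
    unfolding pmax_def using fEnt inEnt[OF that] by (rule Max_ge)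
  have pmax_ge: "pmin \<le> pmax" unfolding pmin_def pmax_def using fEnt
    by (meson Max_ge Min_le insertI1 order_trans)
  define wmin where "wmin = Min (range (\<lambda>k. wv$k))"
  define wmax where "wmax = Max (range (\<lambda>k. wv$k))"
  have wmin0: "wmin > 0" unfolding wmin_def by (subst Min_gr_iff) (auto simp: wpos)
  have wmin_le: "wmin \<le> wv$k" for k unfolding wmin_def by (rule Min_le) auto
  have wmax_ge: "wv$k \<le> wmax" for k unfolding wmax_def by (rule Max_ge) auto
  have wmax0: "wmax > 0" using wmin0 wmin_le[of undefined] wmax_ge[of undefined] by linarith
  have BT: "Bw A ws ** T = T ** Bw P ws" if "set ws \<subseteq> \<Lambda>" for ws
    using that
  proof (induction ws)
    case Nil then show ?case by simp
  next
    case (Cons i ws)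
    then have i: "i \<in> \<Lambda>" and IH: "Bw A ws ** T = T ** Bw P ws" by auto
    have "Bw A (i#ws) ** T = A i ** (Bw A ws ** T)" by (simp add: matrix_mul_assoc)
    also have "\<dots> = (A i ** T) ** Bw P ws" by (simp add: IH matrix_mul_assoc)
    also have "\<dots> = T ** Bw P (i#ws)" by (simp add: AT[OF i] matrix_mul_assoc)
    finally show ?case .
  qed
  have BTv: "Bw A ws *v (T *v c) = T *v (Bw P ws *v c)" if "set ws \<subseteq> \<Lambda>" for ws c
    by (simp add: matrix_vector_mul_assoc BT[OF that])
  have Vb: "\<exists>a. (\<forall>k. a$k \<ge> 0) \<and> lift1 x = T *v a" if xV: "x \<in> Vbar (simp_cone v)" for x
  proof -
    obtain y where y: "y \<in> simp_cone v" "y $ None = 1" "x = projd y"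
      using xV unfolding Vbar_def by blast
    have "lift1 x = y" using y(2,3) by (auto simp: vec_eq_iff lift1_def split: option.splits)
    then show ?thesis using y(1) unfolding cone by auto
  qed
  have ell_ge: "(\<Sum>k\<in>UNIV. wv$k * q$k) \<ge> wmin * (\<Sum>k\<in>UNIV. q$k)" if "\<And>k. q$k \<ge> 0" for q
    unfolding sum_distrib_left using that wmin_le by (intro sum_mono mult_right_mono) auto
  have asum: "(\<Sum>k\<in>UNIV. a$k) \<ge> 1 / wmax" if "\<And>k. a$k \<ge> 0" "lift1 x = T *v a" for a x
  proof -
    have "1 = (\<Sum>k\<in>UNIV. wv$k * a$k)" using that(2) ell[of a] by (metis lift1_None)
    also have "\<dots> \<le> (\<Sum>k\<in>UNIV. wmax * a$k)" using that(1) wmax_ge by (intro sum_mono mult_right_mono) auto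
    finally show ?thesis using wmax0 by (simp add: sum_distrib_left[symmetric] field_simps)
  qed
  have denpos: "(T *v (Bw P s *v a))$None \<ge> wmin * (\<Sum>k\<in>UNIV. (Bw P s *v a)$k)
      \<and> (\<Sum>k\<in>UNIV. (Bw P s *v a)$k) > 0 \<and> (\<forall>k. (Bw P s *v a)$k \<ge> 0)"
    if "\<And>k. a$k \<ge> 0" "lift1 x = T *v a" "set s \<subseteq> \<Lambda>" for a x s
  proof -
    have sa: "(\<Sum>k\<in>UNIV. a$k) > 0" using asum[OF that(1,2)] wmax0
      by (meson less_le_trans divide_pos_pos zero_less_one)
    have nn: "\<forall>k. (Bw P s *v a)$k \<ge> 0" using Bw_nonneg[where P=P and \<Lambda>=\<Lambda> and pmin=pmin, OF Pb1 pmin0 that(1) that(3)] by blast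
    have sp: "(\<Sum>k\<in>UNIV. (Bw P s *v a)$k) > 0" by (rule Bw_sumpos[where P=P and \<Lambda>=\<Lambda> and pmin=pmin, OF Pb1 pmin0 that(1) sa that(3)])
    show ?thesis using nn sp ell_ge[of "Bw P s *v a"] ell by simp
  qed
  have den: "(Bw A s *v lift1 x)$None > 0" if xV: "x \<in> Vbar (simp_cone v)" and sS: "set s \<subseteq> \<Lambda>" for x s
  proof -
    obtain a where a: "\<forall>k. a$k \<ge> 0" "lift1 x = T *v a" using Vb[OF xV] by blast
    have "(Bw A s *v lift1 x)$None = (T *v (Bw P s *v a))$None" using a(2) BTv[OF sS] by simp
    moreover have "wmin * (\<Sum>k\<in>UNIV. (Bw P s *v a)$k) > 0" using denpos[OF _ a(2) sS] a(1) wmin0 by simp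
    ultimately show ?thesis using denpos[OF _ a(2) sS] a(1) by force
  qed
  have part1: "\<forall>i\<in>\<Lambda>. fA (A i) ` Vbar (simp_cone v) \<subseteq> Vbar (simp_cone v)"
  proof (intro ballI subsetI)
    fix i z assume i: "i \<in> \<Lambda>" and z: "z \<in> fA (A i) ` Vbar (simp_cone v)"
    then obtain x where x: "x \<in> Vbar (simp_cone v)" "z = fA (A i) x" by blast
    obtain a where a: "\<forall>k. a$k \<ge> 0" "lift1 x = T *v a" using Vb[OF x(1)] by blast
    have s: "set [i] \<subseteq> \<Lambda>" using i by simp
    define q where "q = Bw P [i] *v a"
    have Aq: "A i *v lift1 x = T *v q" using BTv[OF s, of a] a(2) by (simp add: q_def)
    have q0: "\<forall>k. q$k \<ge> 0" using denpos[OF _ a(2) s] a(1) by (simp add: q_def)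
    define d where "d = (T *v q)$None"
    have d0: "d > 0" using den[OF x(1) s] Aq by (simp add: d_def)
    define y where "y = T *v ((1/d) *\<^sub>R q)"
    have "y \<in> simp_cone v" unfolding cone y_def using q0 d0 by auto
    moreover have "y $ None = 1" using d0 by (simp add: y_def matrix_vector_mult_scaleR d_def)
    moreover have "z = projd y" using x(2) Aq by (simp add: fA_def y_def d_def matrix_vector_mult_scaleR)
    ultimately show "z \<in> Vbar (simp_cone v)" unfolding Vbar_def by blast
  qed
  have part2: "\<exists>U. open U \<and> Vbar (simp_cone v) \<subseteq> U \<and> (\<forall>i\<in>\<Lambda>. real_analytic_on (fA (A i)) U)"
  proof (intro exI[of _ "\<Inter>i\<in>\<Lambda>. {x. (A i *v lift1 x)$None \<noteq> 0}"] conjI ballI)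
    show "open (\<Inter>i\<in>\<Lambda>. {x. (A i *v lift1 x)$None \<noteq> 0})"
    proof (rule open_INT[OF fin], rule ballI)
      fix i
      show "open {x. (A i *v lift1 x)$None \<noteq> 0}"
        unfolding Mv_lift1 by (intro open_Collect_neq continuous_intros)
    qed
    show "Vbar (simp_cone v) \<subseteq> (\<Inter>i\<in>\<Lambda>. {x. (A i *v lift1 x)$None \<noteq> 0})"
    proof (intro subsetI InterI, clarsimp)
      fix x i assume "x \<in> Vbar (simp_cone v)" "i \<in> \<Lambda>" "(A i *v lift1 x)$None = 0"
      then show False using den[of x "[i]"] by simp
    qed
    fix i assume i: "i \<in> \<Lambda>"
    show "real_analytic_on (fA (A i)) (\<Inter>i\<in>\<Lambda>. {x. (A i *v lift1 x)$None \<noteq> 0})"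
      unfolding real_analytic_on_def
    proof
      fix x0 assume "x0 \<in> (\<Inter>i\<in>\<Lambda>. {x. (A i *v lift1 x)$None \<noteq> 0})"
      then have "(A i *v lift1 x0)$None \<noteq> 0" using i by blast
      then show "\<exists>r>0. \<exists>a :: ('d \<Rightarrow> nat) \<Rightarrow> real^'d.
        \<forall>y\<in>ball x0 r. ((\<lambda>\<alpha>. (\<Prod>i\<in>UNIV. (y $ i - x0 $ i) ^ (\<alpha> i)) *\<^sub>R a \<alpha>) has_sum fA (A i) y) UNIV"
        by (rule analytic_point)
    qed
  qed
  define \<rho> where "\<rho> = pmin / (2 * pmax)"
  define \<gamma> where "\<gamma> = 1 - \<rho>"
  have pmax0: "pmax > 0" using pmin0 pmax_ge by linarith
  have \<rho>0: "\<rho> > 0" using pmin0 pmax0 by (simp add: \<rho>_def)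
  have \<rho>1: "\<rho> * pmax \<le> pmin" using pmin0 pmax0 by (simp add: \<rho>_def)
  have \<rho>h: "\<rho> \<le> 1/2" using pmin0 pmax0 pmax_ge by (simp add: \<rho>_def field_simps)
  have \<gamma>0: "\<gamma> > 0" "\<gamma> < 1" using \<rho>0 \<rho>h by (auto simp: \<gamma>_def)
  obtain KT where KT: "KT > 0" "\<And>y. norm (T *v y) \<le> norm y * KT"
    using bounded_linear.pos_bounded[OF matrix_vector_mul_bounded_linear[of T]] by blast
  obtain KP where KP: "KP > 0" "\<And>y::real^('d option). norm (projd y) \<le> norm y * KP"
    using bounded_linear.pos_bounded[OF bl_projd] by blast
  have blI: "bounded_linear (\<lambda>h. Ti *v embd h)"
    using linear_compose[OF linear_embd matrix_vector_mul_linear[of Ti]] linear_conv_bounded_linear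
    by (metis (no_types, lifting) comp_apply ext)
  obtain KI where KI: "KI > 0" "\<And>h. norm (Ti *v embd h) \<le> norm h * KI"
    using bounded_linear.pos_bounded[OF blI] by blast
  define Nn where "Nn = real CARD('d option)"
  define C0 where "C0 = KP * KT / wmin * (2 * (pmax * (Nn * KI) / (pmin * (1 / wmax))))"
  define C where "C = max 1 (C0 / \<gamma>)"
  have C1: "C \<ge> 1" by (simp add: C_def)
  have part3: "\<forall>n ws x. length ws = n \<longrightarrow> set ws \<subseteq> \<Lambda> \<longrightarrow> x \<in> Vbar (simp_cone v) \<longrightarrow>
            (\<exists>D. (fword A ws has_derivative D) (at x) \<and> onorm D \<le> C * \<gamma> ^ n)"
  proof (intro allI impI)
    fix n ws x assume n: "length ws = n" and ws: "set ws \<subseteq> \<Lambda>" and x: "x \<in> Vbar (simp_cone v)"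
    show "\<exists>D. (fword A ws has_derivative D) (at x) \<and> onorm D \<le> C * \<gamma> ^ n"
    proof (cases "ws = []")
      case True
      have "(fword A ws has_derivative (\<lambda>h. h)) (at x)" using True by (simp add: id_def)
      moreover have "onorm (\<lambda>h::real^'d. h) \<le> C * \<gamma> ^ n" using True n C1 by (simp add: onorm_id)
      ultimately show ?thesis by blast
    next
      case False
      obtain a where a: "\<forall>k. a$k \<ge> 0" "lift1 x = T *v a" using Vb[OF x] by blast
      define sa where "sa = 1 / wmax"
      have sa0: "sa > 0" using wmax0 by (simp add: sa_def)
      have saa: "sa \<le> (\<Sum>k\<in>UNIV. a$k)" using asum[of a x] a by (simp add: sa_def)
      define B where "B = Bw A ws"
      define q where "q = Bw P ws *v a"
      have dens: "\<forall>k\<le>length ws. (Bw A (drop k ws) *v lift1 x)$None \<noteq> 0"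
      proof (intro allI impI)
        fix k assume "k \<le> length ws"
        have "set (drop k ws) \<subseteq> \<Lambda>" using ws set_drop_subset by (metis order_trans)
        then show "(Bw A (drop k ws) *v lift1 x)$None \<noteq> 0" using den[OF x] by (metis less_irrefl)
      qed
      have deriv: "(fword A ws has_derivative Dfa B x) (at x)" using fword_deriv[OF dens] B_def by simp
      have qp: "(T *v q)$None \<ge> wmin * (\<Sum>k\<in>UNIV. q$k)" "(\<Sum>k\<in>UNIV. q$k) > 0" "\<forall>k. q$k \<ge> 0"
        using denpos[OF _ a(2) ws] a(1) by (simp_all add: q_def)
      have u: "B *v lift1 x = T *v q" using BTv[OF ws] a(2) B_def q_def by simp
      define d where "d = (T *v q)$None"
      have d0: "d > 0" using qp(1,2) wmin0 d_def
        by (smt (verit, best) mult_pos_pos)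
      have sq: "(\<Sum>k\<in>UNIV. q$k) \<le> d / wmin" using qp(1) wmin0 by (simp add: d_def field_simps)
      define g where "g = \<gamma> ^ (length ws - 1)"
      have g0: "g > 0" using \<gamma>0 by (simp add: g_def)
      have gn: "C0 * g \<le> C * \<gamma> ^ n"
      proof -
        have "C0 * g = (C0 / \<gamma>) * \<gamma> ^ n"
          using False n \<gamma>0 by (cases ws) (auto simp: g_def)
        also have "\<dots> \<le> C * \<gamma> ^ n" using \<gamma>0 by (intro mult_right_mono) (auto simp: C_def)
        finally show ?thesis .
      qed
      have bound: "norm (Dfa B x h) \<le> C * \<gamma> ^ n * norm h" for h
      proof -
        define b where "b = Ti *v embd h"
        have Tb: "T *v b = embd h" by (simp add: b_def TTi)
        define c where "c = Bw P ws *v b"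
        have z: "B *v embd h = T *v c" using BTv[OF ws, of b] Tb B_def c_def by simp
        define Eb where "Eb = 2 * (pmax * (\<Sum>k\<in>UNIV. \<bar>b$k\<bar>) / (pmin * sa))"
        have Eb0: "Eb \<ge> 0" using pmin0 pmax0 sa0 by (simp add: Eb_def sum_nonneg)
        have osc: "Osc q c (Eb * g)"
          using osc_chain[where P=P and \<Lambda>=\<Lambda> and pmin=pmin and pmax=pmax and \<rho>=\<rho> and a=a and sa=sa and b=b,
              OF Pb1 Pb2 pmin0 \<rho>0 \<rho>1 _ sa0 saa ws False] a(1)
          by (simp add: q_def c_def \<gamma>_def Eb_def g_def)
        define t where "t = (\<Sum>k\<in>UNIV. wv$k * c$k) / (\<Sum>k\<in>UNIV. wv$k * q$k)"
        have lq: "(\<Sum>k\<in>UNIV. wv$k * q$k) > 0" using d0 ell[of q] by (simp add: d_def)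
        have fin1: "(\<Sum>j\<in>UNIV. \<bar>c$j - t * q$j\<bar>) \<le> Eb * g * (\<Sum>j\<in>UNIV. q$j)"
          unfolding t_def by (rule osc_final[OF _ _ lq osc]) (use qp(3) wpos less_imp_le in auto)
        have Dh: "Dfa B x h = projd ((1/d) *\<^sub>R (T *v (c - t *\<^sub>R q)))"
          by (simp add: Dfa_def u z d_def t_def ell matrix_vector_mult_diff_distrib matrix_vector_mult_scaleR)
        have nb: "(\<Sum>k\<in>UNIV. \<bar>b$k\<bar>) \<le> Nn * KI * norm h"
        proof -
          have "(\<Sum>k\<in>UNIV. \<bar>b$k\<bar>) \<le> (\<Sum>k\<in>(UNIV::'d option set). norm b)"
            by (intro sum_mono component_le_norm_cart)
          also have "\<dots> = Nn * norm b" by (simp add: Nn_def)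
          also have "\<dots> \<le> Nn * (norm h * KI)" using KI(2)[of h] by (intro mult_left_mono) (auto simp: Nn_def b_def)
          finally show ?thesis by (simp add: mult_ac)
        qed
        have EbB: "Eb \<le> 2 * (pmax * (Nn * KI * norm h) / (pmin * sa))"
          unfolding Eb_def using nb pmin0 pmax0 sa0
          by (intro mult_left_mono divide_right_mono) auto
        have "norm (Dfa B x h) \<le> norm ((1/d) *\<^sub>R (T *v (c - t *\<^sub>R q))) * KP"
          unfolding Dh by (rule KP(2))
        also have "\<dots> = (1/d) * norm (T *v (c - t *\<^sub>R q)) * KP" using d0 by simp
        also have "\<dots> \<le> (1/d) * (KT * (\<Sum>j\<in>UNIV. \<bar>c$j - t * q$j\<bar>)) * KP"
        proof -
          have "norm (T *v (c - t *\<^sub>R q)) \<le> norm (c - t *\<^sub>R q) * KT" by (rule KT(2))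
          also have "\<dots> \<le> (\<Sum>j\<in>UNIV. \<bar>c$j - t * q$j\<bar>) * KT"
            using norm_le_l1_cart[of "c - t *\<^sub>R q"] KT(1) by (intro mult_right_mono) auto
          finally show ?thesis using d0 KP(1) by (intro mult_right_mono mult_left_mono) (auto simp: mult_ac)
        qed
        also have "\<dots> \<le> (1/d) * (KT * (Eb * g * (d / wmin))) * KP"
        proof -
          have "(\<Sum>j\<in>UNIV. \<bar>c$j - t * q$j\<bar>) \<le> Eb * g * (d / wmin)"
            using fin1 sq Eb0 g0 by (meson order_trans mult_left_mono mult_nonneg_nonneg less_imp_le)
          then show ?thesis using d0 KP(1) KT(1) by (intro mult_right_mono mult_left_mono) auto
        qed
        also have "\<dots> = KP * KT / wmin * Eb * g" using d0 wmin0 by (simp add: field_simps)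
        also have "\<dots> \<le> KP * KT / wmin * (2 * (pmax * (Nn * KI * norm h) / (pmin * sa))) * g"
          using EbB KP(1) KT(1) wmin0 g0 by (intro mult_right_mono mult_left_mono) auto
        also have "\<dots> = C0 * g * norm h" by (simp add: C0_def sa_def mult_ac)
        also have "\<dots> \<le> C * \<gamma> ^ n * norm h" using gn by (intro mult_right_mono) auto
        finally show ?thesis .
      qed
      show ?thesis using deriv onorm_le[of "Dfa B x", OF bound] by blast
    qed
  qed
  have C0': "C > 0" using C1 by simp
  show ?thesis using part1 part2 part3 \<gamma>0 C0' by blast
qed

end
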